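(* Let $f,g:\mathbb{R}^n\to\mathbb{R}$ satisfy assumptions (A1)–(A4) below, let $\zeta\in[0,1)$ and $x_0\in\Omega=\{x:g(x)\le0\}$. Then the trajectory $x(t;\zeta,x_0)$ must leave the feasible set $\Omega$. Hence a solution point $x_\zeta^\sharp$ exists, i.e. there is a time $t^\sharp$ with $g(x(t^\sharp;\zeta,x_0))=0$ and $g(x(t;\zeta,x_0))<0$ for $t<t^\sharp$ (the first time the trajectory reaches the constraint boundary), and $x_\zeta^\sharp=x(t^\sharp;\zeta,x_0)$.
   Context: Assumptions: (A1) $\lim_{|x|\to\infty} f(x)=+\infty$; (A2) $\nabla f(x)\neq 0$ for all $x\in\Omega$; (A3) $\nabla g(x)\neq 0$ for all $x\in\Omega$; (A4) $f,g$ twice continuously differentiable. For $\zeta\in[0,1)$, $\mathbf{s}_\zeta(x)=-\frac{\nabla f(x)}{|\nabla f(x)|}-\zeta\frac{\nabla g(x)}{|\nabla g(x)|}$, and $x(t;\zeta,x_0)$ is the solution of $\frac{dx}{dt}=\mathbf{s}_\zeta(x)$, $x(0)=x_0$, on its maximal interval of existence in $E=\{x:\nabla f(x)\ne0,\nabla g(x)\ne0\}$. *)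

theory Defs
  imports "HOL-Analysis.Analysis"
begin

definition grad :: "('a::euclidean_space \<Rightarrow> real) \<Rightarrow> 'a \<Rightarrow> 'a" where
  "grad f x = (\<Sum>i\<in>Basis. frechet_derivative f (at x) i *\<^sub>R i)"

definition C2 :: "('a::euclidean_space \<Rightarrow> real) \<Rightarrow> bool" where
  "C2 f \<longleftrightarrow> (\<exists>(f' :: 'a \<Rightarrow> ('a \<Rightarrow>\<^sub>L real)) (f'' :: 'a \<Rightarrow> ('a \<Rightarrow>\<^sub>L ('a \<Rightarrow>\<^sub>L real))).
      (\<forall>x. (f has_derivative blinfun_apply (f' x)) (at x)) \<and>
      (\<forall>x. (f' has_derivative blinfun_apply (f'' x)) (at x)) \<and>
      continuous_on UNIV f'')"

definition Eset :: "('a::euclidean_space \<Rightarrow> real) \<Rightarrow> ('a \<Rightarrow> real) \<Rightarrow> 'a set" where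
  "Eset f g = {x. grad f x \<noteq> 0 \<and> grad g x \<noteq> 0}"

definition sfield :: "('a::euclidean_space \<Rightarrow> real) \<Rightarrow> ('a \<Rightarrow> real) \<Rightarrow> real \<Rightarrow> 'a \<Rightarrow> 'a" where
  "sfield f g \<zeta> x = - ((1 / norm (grad f x)) *\<^sub>R grad f x) - (\<zeta> / norm (grad g x)) *\<^sub>R grad g x"

definition is_sol ::
  "('a::euclidean_space \<Rightarrow> real) \<Rightarrow> ('a \<Rightarrow> real) \<Rightarrow> real \<Rightarrow> 'a \<Rightarrow> real set \<Rightarrow> (real \<Rightarrow> 'a) \<Rightarrow> bool" where
  "is_sol f g \<zeta> x0 J x \<longleftrightarrow> is_interval J \<and> open J \<and> 0 \<in> J \<and> x 0 = x0 \<and>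
     (\<forall>t\<in>J. x t \<in> Eset f g \<and> (x has_vector_derivative sfield f g \<zeta> (x t)) (at t))"

definition is_max_sol ::
  "('a::euclidean_space \<Rightarrow> real) \<Rightarrow> ('a \<Rightarrow> real) \<Rightarrow> real \<Rightarrow> 'a \<Rightarrow> real set \<Rightarrow> (real \<Rightarrow> 'a) \<Rightarrow> bool" where
  "is_max_sol f g \<zeta> x0 J x \<longleftrightarrow> is_sol f g \<zeta> x0 J x \<and>
     (\<forall>J' y. is_sol f g \<zeta> x0 J' y \<and> J \<subseteq> J' \<and> (\<forall>t\<in>J. y t = x t) \<longrightarrow> J' = J)"

end

theory Submission
  imports Defs
begin

lemma vec_lip:
  fixes w :: "real \<Rightarrow> 'a::real_normed_vector"
  assumes "convex S" "\<And>t. t\<in>S \<Longrightarrow> (w has_vector_derivative w' t) (at t within S)"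
    "\<And>t. t\<in>S \<Longrightarrow> norm (w' t) \<le> B" "a\<in>S" "b\<in>S"
  shows "norm (w b - w a) \<le> B * \<bar>b - a\<bar>"
proof -
  have "norm (w b - w a) \<le> B * norm (b - a)"
  proof (rule differentiable_bound[OF assms(1) _ _ assms(5) assms(4)])
    fix t assume "t \<in> S"
    then show "(w has_derivative (\<lambda>h. h *\<^sub>R w' t)) (at t within S)"
      using assms(2) by (simp add: has_vector_derivative_def)
    show "onorm (\<lambda>h. h *\<^sub>R w' t) \<le> B"
    proof (rule onorm_bound)
      show "0 \<le> B" using assms(3)[OF \<open>t \<in> S\<close>] norm_ge_zero order_trans by blast
      fix h :: real show "norm (h *\<^sub>R w' t) \<le> B * norm h"
        using mult_left_mono[OF assms(3)[OF \<open>t \<in> S\<close>] abs_ge_zero[of h]] by (simp add: mult.commute)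
    qed
  qed
  then show ?thesis by simp
qed

lemma normalize_lip:
  fixes v w :: "'a::real_normed_vector"
  assumes m: "0 < m" "m \<le> norm v" "m \<le> norm w"
  shows "norm ((1 / norm v) *\<^sub>R v - (1 / norm w) *\<^sub>R w) \<le> (2 / m) * norm (v - w)"
proof -
  have nv: "norm v > 0" "norm w > 0" using m by auto
  have eq: "(1 / norm v) *\<^sub>R v - (1 / norm w) *\<^sub>R w
      = (1 / norm v) *\<^sub>R (v - w) + ((1 / norm v) - (1 / norm w)) *\<^sub>R w"
    by (simp add: algebra_simps)
  have n2: "norm (((1 / norm v) - (1 / norm w)) *\<^sub>R w) = \<bar>norm w - norm v\<bar> / norm v"
    using nv by (simp add: field_simps abs_mult)
  have "\<bar>norm w - norm v\<bar> \<le> norm (v - w)"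
    by (metis abs_minus_commute norm_triangle_ineq3)
  then have "norm (((1 / norm v) - (1 / norm w)) *\<^sub>R w) \<le> norm (v - w) / norm v"
    using n2 nv by (simp add: divide_right_mono)
  moreover have "norm ((1 / norm v) *\<^sub>R (v - w)) = norm (v - w) / norm v" using nv by simp
  moreover have "norm ((1 / norm v) *\<^sub>R (v - w) + ((1 / norm v) - (1 / norm w)) *\<^sub>R w)
     \<le> norm ((1 / norm v) *\<^sub>R (v - w)) + norm (((1 / norm v) - (1 / norm w)) *\<^sub>R w)"
    by (rule norm_triangle_ineq)
  ultimately have "norm ((1 / norm v) *\<^sub>R v - (1 / norm w) *\<^sub>R w) \<le> 2 * (norm (v - w) / norm v)"
    unfolding eq by linarith
  also have "\<dots> \<le> 2 * (norm (v - w) / m)"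
    using m nv by (simp add: divide_left_mono)
  finally show ?thesis by simp
qed

lemma C2_grad:
  assumes "C2 f"
  shows "continuous_on UNIV f" "continuous_on UNIV (grad f)"
    "\<And>y. (f has_derivative (\<lambda>v. grad f y \<bullet> v)) (at y)"
    "\<And>c R. \<exists>L\<ge>0. \<forall>y\<in>cball c R. \<forall>w\<in>cball c R. norm (grad f y - grad f w) \<le> L * norm (y - w)"
proof -
  obtain f' :: "'a \<Rightarrow> ('a \<Rightarrow>\<^sub>L real)" and f'' where
    d1: "\<And>x. (f has_derivative blinfun_apply (f' x)) (at x)" and
    d2: "\<And>x. (f' has_derivative blinfun_apply (f'' x)) (at x)" and
    c2: "continuous_on UNIV f''"
    using assms unfolding C2_def by blast
  have ge: "grad f y = (\<Sum>i\<in>Basis. blinfun_apply (f' y) i *\<^sub>R i)" for y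
    unfolding grad_def using frechet_derivative_at[OF d1[of y]] by simp
  have gi: "grad f y \<bullet> v = blinfun_apply (f' y) v" for y v
  proof -
    have "grad f y \<bullet> v = (\<Sum>i\<in>Basis. blinfun_apply (f' y) i * (i \<bullet> v))"
      by (simp add: ge inner_sum_left)
    also have "\<dots> = blinfun_apply (f' y) (\<Sum>i\<in>Basis. (v \<bullet> i) *\<^sub>R i)"
      by (simp add: blinfun.sum_right blinfun.scaleR_right inner_commute mult.commute)
    also have "\<dots> = blinfun_apply (f' y) v" by (simp add: euclidean_representation)
    finally show ?thesis .
  qed
  show "(f has_derivative (\<lambda>v. grad f y \<bullet> v)) (at y)" for y
    using d1[of y] by (simp add: gi)
  show "continuous_on UNIV f"
    by (metis d1 continuous_at_imp_continuous_on has_derivative_continuous)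
  have cf': "continuous_on UNIV f'"
    by (metis d2 continuous_at_imp_continuous_on has_derivative_continuous)
  show "continuous_on UNIV (grad f)"
    unfolding ge[abs_def]
    by (intro continuous_intros continuous_on_compose2[OF cf'] | simp)+
  fix c :: 'a and R :: real
  have "compact (f'' ` cball c R)"
    by (rule compact_continuous_image[OF continuous_on_subset[OF c2]]) auto
  then obtain B where B: "B > 0" "\<And>y. y \<in> cball c R \<Longrightarrow> norm (f'' y) \<le> B"
    using compact_imp_bounded bounded_pos by (metis imageI)
  have lip': "norm (f' y - f' w) \<le> B * norm (y - w)" if "y \<in> cball c R" "w \<in> cball c R" for y w
  proof (rule differentiable_bound[OF convex_cball _ _ that])
    fix x assume "x \<in> cball c R"
    show "(f' has_derivative blinfun_apply (f'' x)) (at x within cball c R)"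
      using d2 has_derivative_at_withinI by blast
    show "onorm (blinfun_apply (f'' x)) \<le> B" using B \<open>x \<in> cball c R\<close> by (simp add: norm_blinfun.rep_eq[symmetric])
  qed
  have "norm (grad f y - grad f w) \<le> (real DIM('a) * B) * norm (y - w)"
    if "y \<in> cball c R" "w \<in> cball c R" for y w
  proof -
    have "grad f y - grad f w = (\<Sum>i\<in>Basis. blinfun_apply (f' y - f' w) i *\<^sub>R i)"
      by (simp add: ge blinfun.diff_left scaleR_diff_left sum_subtractf)
    also have "norm \<dots> \<le> (\<Sum>i\<in>(Basis::'a set). norm (f' y - f' w))"
    proof -
      have "norm (\<Sum>i\<in>Basis. blinfun_apply (f' y - f' w) i *\<^sub>R i) \<le> (\<Sum>i\<in>(Basis::'a set). norm (blinfun_apply (f' y - f' w) i *\<^sub>R i))"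
        by (rule norm_sum)
      also have "\<dots> \<le> (\<Sum>i\<in>(Basis::'a set). norm (f' y - f' w))"
      proof (rule sum_mono)
        fix i :: 'a assume "i \<in> Basis"
        then show "norm (blinfun_apply (f' y - f' w) i *\<^sub>R i) \<le> norm (f' y - f' w)"
          using norm_blinfun[of "f' y - f' w" i] by simp
      qed
      finally show ?thesis .
    qed
    also have "\<dots> = real DIM('a) * norm (f' y - f' w)" by simp
    also have "\<dots> \<le> real DIM('a) * (B * norm (y - w))"
      using lip'[OF that] by (simp add: mult_left_mono)
    finally show ?thesis by (simp add: mult.assoc)
  qed
  then show "\<exists>L\<ge>0. \<forall>y\<in>cball c R. \<forall>w\<in>cball c R. norm (grad f y - grad f w) \<le> L * norm (y - w)"
    using B by (intro exI[of _ "real DIM('a) * B"]) auto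
qed

lemma sfield_alt: "sfield f g \<zeta> y = - ((1 / norm (grad f y)) *\<^sub>R grad f y) - \<zeta> *\<^sub>R ((1 / norm (grad g y)) *\<^sub>R grad g y)"
  by (simp add: sfield_def)

lemma sfield_bound:
  assumes "0 \<le> \<zeta>" "\<zeta> < 1"
  shows "norm (sfield f g \<zeta> y) \<le> 2"
proof -
  have n1: "norm ((1 / norm v) *\<^sub>R v) \<le> 1" for v :: 'a
    by (cases "v = 0") auto
  have "norm (sfield f g \<zeta> y) \<le> norm ((1 / norm (grad f y)) *\<^sub>R grad f y) + norm (\<zeta> *\<^sub>R ((1 / norm (grad g y)) *\<^sub>R grad g y))"
    unfolding sfield_alt by (metis norm_minus_cancel norm_triangle_ineq4)
  also have "\<dots> \<le> 1 + \<zeta> * 1"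
    using n1[of "grad f y"] n1[of "grad g y"] assms
    by (intro add_mono) (auto intro: mult_left_mono)
  finally show ?thesis using assms by simp
qed

lemma sfield_descent:
  assumes "0 \<le> \<zeta>" "grad f y \<noteq> 0" "grad g y \<noteq> 0"
  shows "grad f y \<bullet> sfield f g \<zeta> y \<le> - (1 - \<zeta>) * norm (grad f y)"
proof -
  define a where "a = grad f y"
  define b where "b = grad g y"
  have na: "norm a > 0" "norm b > 0" using assms by (auto simp: a_def b_def)
  have "a \<bullet> sfield f g \<zeta> y = - (a \<bullet> a) / norm a - \<zeta> * (a \<bullet> b) / norm b"
    by (simp add: sfield_def a_def[symmetric] b_def[symmetric] inner_diff_right)
  also have "a \<bullet> a = norm a * norm a" by (simp add: power2_norm_eq_inner[symmetric] power2_eq_square)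
  also have "- (norm a * norm a) / norm a = - norm a" using na by simp
  also have "- norm a - \<zeta> * (a \<bullet> b) / norm b \<le> - norm a + \<zeta> * norm a"
  proof -
    have "- (a \<bullet> b) \<le> norm a * norm b" using Cauchy_Schwarz_ineq2[of a b] by linarith
    then have "(- (a \<bullet> b)) / norm b \<le> norm a" using na(2) by (subst pos_divide_le_eq) auto
    then have "\<zeta> * (- (a \<bullet> b) / norm b) \<le> \<zeta> * norm a" using assms(1) by (rule mult_left_mono)
    then show ?thesis by simp
  qed
  finally show ?thesis by (simp add: a_def algebra_simps)
qed

lemma sfield_lip:
  assumes "C2 f" "C2 g" "0 \<le> \<zeta>" "grad f p \<noteq> 0" "grad g p \<noteq> 0"
  shows "\<exists>R>0. \<exists>L\<ge>0. (\<forall>y\<in>cball p R. grad f y \<noteq> 0 \<and> grad g y \<noteq> 0) \<and>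
     (\<forall>y\<in>cball p R. \<forall>w\<in>cball p R. norm (sfield f g \<zeta> y - sfield f g \<zeta> w) \<le> L * norm (y - w))"
proof -
  define m where "m = min (norm (grad f p)) (norm (grad g p)) / 2"
  have m0: "m > 0" using assms by (simp add: m_def)
  have cf: "continuous_on UNIV (grad f)" and cg: "continuous_on UNIV (grad g)"
    using C2_grad assms by blast+
  have "open ({y. m < norm (grad f y)} \<inter> {y. m < norm (grad g y)})"
    by (intro open_Int open_Collect_less continuous_intros continuous_on_compose2[OF cf] continuous_on_compose2[OF cg] | simp)+
  moreover have "p \<in> {y. m < norm (grad f y)} \<inter> {y. m < norm (grad g y)}"
  proof -
    have "norm (grad f p) > 0" "norm (grad g p) > 0" using assms by auto
    moreover note min.cobounded1[of "norm (grad f p)" "norm (grad g p)"] min.cobounded2[of "norm (grad f p)" "norm (grad g p)"]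
    ultimately have "m < norm (grad f p)" "m < norm (grad g p)" unfolding m_def by linarith+
    then show ?thesis by simp
  qed
  ultimately obtain R where R: "R > 0" "cball p R \<subseteq> {y. m < norm (grad f y)} \<inter> {y. m < norm (grad g y)}"
    by (meson open_contains_cball)
  obtain Lf where Lf: "Lf \<ge> 0" "\<forall>y\<in>cball p R. \<forall>w\<in>cball p R. norm (grad f y - grad f w) \<le> Lf * norm (y - w)"
    using C2_grad(4)[OF assms(1)] by blast
  obtain Lg where Lg: "Lg \<ge> 0" "\<forall>y\<in>cball p R. \<forall>w\<in>cball p R. norm (grad g y - grad g w) \<le> Lg * norm (y - w)"
    using C2_grad(4)[OF assms(2)] by blast
  define L where "L = (2 / m) * Lf + \<zeta> * ((2 / m) * Lg)"
  have L0: "L \<ge> 0" using Lf Lg m0 assms by (simp add: L_def)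
  have P1: "\<forall>y\<in>cball p R. grad f y \<noteq> 0 \<and> grad g y \<noteq> 0" using R m0 by force
  have P2: "\<forall>y\<in>cball p R. \<forall>w\<in>cball p R. norm (sfield f g \<zeta> y - sfield f g \<zeta> w) \<le> L * norm (y - w)"
  proof (intro ballI)
    fix y w assume y: "y \<in> cball p R" and w: "w \<in> cball p R"
    let ?a = "\<lambda>y. (1 / norm (grad f y)) *\<^sub>R grad f y"
    let ?b = "\<lambda>y. (1 / norm (grad g y)) *\<^sub>R grad g y"
    have ab: "norm (?a y - ?a w) \<le> (2 / m) * (Lf * norm (y - w))"
    proof -
      have "norm (?a y - ?a w) \<le> (2 / m) * norm (grad f y - grad f w)"
        by (rule normalize_lip) (use m0 R y w in force)+
      also have "\<dots> \<le> (2 / m) * (Lf * norm (y - w))"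
        using Lf y w m0 by (intro mult_left_mono) auto
      finally show ?thesis .
    qed
    have bb: "norm (?b y - ?b w) \<le> (2 / m) * (Lg * norm (y - w))"
    proof -
      have "norm (?b y - ?b w) \<le> (2 / m) * norm (grad g y - grad g w)"
        by (rule normalize_lip) (use m0 R y w in force)+
      also have "\<dots> \<le> (2 / m) * (Lg * norm (y - w))"
        using Lg y w m0 by (intro mult_left_mono) auto
      finally show ?thesis .
    qed
    have "sfield f g \<zeta> y - sfield f g \<zeta> w = - (?a y - ?a w) - \<zeta> *\<^sub>R (?b y - ?b w)"
      unfolding sfield_alt by (simp add: algebra_simps)
    then have "norm (sfield f g \<zeta> y - sfield f g \<zeta> w) \<le> norm (?a y - ?a w) + \<zeta> * norm (?b y - ?b w)"
      using assms(3) by (metis abs_of_nonneg norm_minus_cancel norm_scaleR norm_triangle_ineq4)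
    also have "\<dots> \<le> (2 / m) * (Lf * norm (y - w)) + \<zeta> * ((2 / m) * (Lg * norm (y - w)))"
      using ab bb assms(3) by (intro add_mono mult_left_mono) auto
    also have "\<dots> = L * norm (y - w)" by (simp add: L_def algebra_simps)
    finally show "norm (sfield f g \<zeta> y - sfield f g \<zeta> w) \<le> L * norm (y - w)" .
  qed
  show ?thesis using R(1) L0 P1 P2 by blast
qed

lemma local_exist:
  fixes F :: "'a::euclidean_space \<Rightarrow> 'a" and p :: 'a and sa :: real
  assumes r: "0 < r" and d: "0 < \<delta>" and dM: "\<delta> * M \<le> r" and dL: "\<delta> * L < 1" and L0: "0 \<le> L"
    and bnd: "\<And>y. y \<in> cball p r \<Longrightarrow> norm (F y) \<le> M"
    and lip: "\<And>y w. y \<in> cball p r \<Longrightarrow> w \<in> cball p r \<Longrightarrow> norm (F y - F w) \<le> L * norm (y - w)"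
  shows "\<exists>z. z sa = p \<and> (\<forall>t\<in>{sa..sa+\<delta>}. z t \<in> cball p r \<and>
            (z has_vector_derivative F (z t)) (at t within {sa..sa+\<delta>}))"
proof -
  have M0: "0 \<le> M" using bnd[of p] r by (meson centre_in_cball less_imp_le norm_ge_zero order_trans)
  have "L-lipschitz_on (cball p r) F"
    by (rule lipschitz_onI) (use lip L0 in \<open>auto simp: dist_norm\<close>)
  then have Fc: "continuous_on (cball p r) F" by (rule lipschitz_on_continuous_on)
  define I where "I = {sa..sa+\<delta>}"
  have cI: "cbox sa (sa+\<delta>) = I" by (simp add: I_def cbox_interval)
  define S :: "(real \<Rightarrow>\<^sub>C 'a) set" where "S = PiC UNIV (\<lambda>_. cball p r)"
  have memS: "\<phi> \<in> S \<longleftrightarrow> (\<forall>t. apply_bcontfun \<phi> t \<in> cball p r)" for \<phi>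
    by (auto simp add: S_def mem_PiC_iff Pi_iff)
  have contI: "continuous_on I (\<lambda>s. F (apply_bcontfun \<phi> s))" if "\<phi> \<in> S" for \<phi>
    by (rule continuous_on_compose2[OF Fc continuous_on_apply_bcontfun]) (use that memS in auto)
  define G where "G \<phi> t = p + integral {sa..t} (\<lambda>s. F (apply_bcontfun \<phi> s))" for \<phi> t
  have Gder: "(G \<phi> has_vector_derivative F (apply_bcontfun \<phi> t)) (at t within I)"
    if "\<phi> \<in> S" "t \<in> I" for \<phi> t
  proof -
    have "((\<lambda>u. integral {sa..u} (\<lambda>s. F (apply_bcontfun \<phi> s))) has_vector_derivative F (apply_bcontfun \<phi> t)) (at t within {sa..sa+\<delta>})"
      by (rule integral_has_vector_derivative) (use contI[OF that(1)] that(2) in \<open>auto simp: I_def\<close>)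
    then have "((\<lambda>u. p + integral {sa..u} (\<lambda>s. F (apply_bcontfun \<phi> s))) has_vector_derivative 0 + F (apply_bcontfun \<phi> t)) (at t within {sa..sa+\<delta>})"
      by (intro has_vector_derivative_add has_vector_derivative_const)
    then show ?thesis by (simp add: G_def[abs_def] I_def)
  qed
  have Gcont: "continuous_on I (G \<phi>)" if "\<phi> \<in> S" for \<phi>
    using Gder[OF that] continuous_on_eq_continuous_within has_vector_derivative_continuous by blast
  define \<Phi> where "\<Phi> \<phi> = (SOME \<psi>. \<forall>t. apply_bcontfun \<psi> t = G \<phi> (clamp sa (sa+\<delta>) t))" for \<phi>
  have \<Phi>: "apply_bcontfun (\<Phi> \<phi>) t = G \<phi> (clamp sa (sa+\<delta>) t)" if phS: "\<phi> \<in> S" for \<phi> t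
  proof -
    obtain g :: "real \<Rightarrow>\<^sub>C 'a" where "\<And>t. g t = G \<phi> (clamp sa (sa+\<delta>) t)"
      using continuous_on_cbox_bcontfunE[of sa "sa+\<delta>" "G \<phi>"] Gcont[OF phS] cI by metis
    then have "\<exists>\<psi>. \<forall>t. apply_bcontfun \<psi> t = G \<phi> (clamp sa (sa+\<delta>) t)" by blast
    then show ?thesis unfolding \<Phi>_def by (rule someI_ex[where P="\<lambda>\<psi>. \<forall>t. apply_bcontfun \<psi> t = G \<phi> (clamp sa (sa+\<delta>) t)", THEN spec])
  qed
  have clampI: "clamp sa (sa+\<delta>) t \<in> I" for t
    using clamp_in_interval[of sa "sa+\<delta>" t] d cI by auto
  have Gbnd: "norm (G \<phi> t - p) \<le> M * (t - sa)" if "\<phi> \<in> S" "t \<in> I" for \<phi> t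
  proof -
    have "norm (integral {sa..t} (\<lambda>s. F (apply_bcontfun \<phi> s))) \<le> M * (t - sa)"
      apply (rule integral_bound)
      using that contI[OF that(1)] bnd memS by (auto simp: I_def elim!: continuous_on_subset)
    then show ?thesis by (simp add: G_def)
  qed
  have into: "\<Phi> ` S \<subseteq> S"
  proof
    fix \<psi> assume "\<psi> \<in> \<Phi> ` S"
    then obtain \<phi> where \<phi>: "\<phi> \<in> S" "\<psi> = \<Phi> \<phi>" by blast
    have "apply_bcontfun \<psi> t \<in> cball p r" for t
    proof -
      let ?c = "clamp sa (sa+\<delta>) t"
      have "norm (G \<phi> ?c - p) \<le> M * (?c - sa)" using Gbnd[OF \<phi>(1) clampI] .
      also have "\<dots> \<le> M * \<delta>" using clampI[of t] M0 by (auto simp: I_def intro!: mult_left_mono)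
      finally show ?thesis using dM \<Phi>[OF \<phi>(1)] \<phi>(2) by (simp add: dist_norm norm_minus_commute mult.commute)
    qed
    then show "\<psi> \<in> S" using memS by blast
  qed
  have contr: "dist (\<Phi> \<phi>) (\<Phi> \<psi>) \<le> (\<delta> * L) * dist \<phi> \<psi>" if "\<phi> \<in> S" "\<psi> \<in> S" for \<phi> \<psi>
  proof (rule dist_bound)
    fix t
    let ?c = "clamp sa (sa+\<delta>) t"
    have sub: "{sa..?c} \<subseteq> I" using clampI[of t] by (auto simp: I_def)
    have i1: "(\<lambda>s. F (apply_bcontfun \<phi> s)) integrable_on {sa..?c}"
      by (rule integrable_continuous_real, rule continuous_on_subset[OF contI[OF that(1)] sub])
    have i2: "(\<lambda>s. F (apply_bcontfun \<psi> s)) integrable_on {sa..?c}"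
      by (rule integrable_continuous_real, rule continuous_on_subset[OF contI[OF that(2)] sub])
    have "dist (\<Phi> \<phi> t) (\<Phi> \<psi> t) = norm (integral {sa..?c} (\<lambda>s. F (apply_bcontfun \<phi> s) - F (apply_bcontfun \<psi> s)))"
      using \<Phi>[OF that(1)] \<Phi>[OF that(2)] integral_diff[OF i1 i2] by (simp add: G_def dist_norm)
    also have "\<dots> \<le> (L * dist \<phi> \<psi>) * (?c - sa)"
    proof (rule integral_bound)
      show "sa \<le> ?c" using clampI[of t] by (auto simp: I_def)
      show "continuous_on {sa..?c} (\<lambda>s. F (apply_bcontfun \<phi> s) - F (apply_bcontfun \<psi> s))"
        by (intro continuous_intros continuous_on_subset[OF contI[OF that(1)] sub] continuous_on_subset[OF contI[OF that(2)] sub])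
      fix s assume "s \<in> {sa..?c}"
      have "norm (F (apply_bcontfun \<phi> s) - F (apply_bcontfun \<psi> s)) \<le> L * norm (apply_bcontfun \<phi> s - apply_bcontfun \<psi> s)"
        using lip memS that by blast
      also have "\<dots> \<le> L * dist \<phi> \<psi>"
        using dist_bounded[of \<phi> s \<psi>] L0 by (simp add: dist_norm mult_left_mono)
      finally show "norm (F (apply_bcontfun \<phi> s) - F (apply_bcontfun \<psi> s)) \<le> L * dist \<phi> \<psi>" .
    qed
    also have "\<dots> \<le> (L * dist \<phi> \<psi>) * \<delta>"
      using clampI[of t] L0 by (auto simp: I_def intro!: mult_left_mono)
    finally show "dist (\<Phi> \<phi> t) (\<Phi> \<psi> t) \<le> (\<delta> * L) * dist \<phi> \<psi>" by (simp add: algebra_simps)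
  qed
  have "complete S" unfolding S_def
    by (simp add: complete_eq_closed closed_PiC)
  moreover have "S \<noteq> {}"
  proof -
    have "const_bcontfun p \<in> S" using memS r by (simp add: const_bcontfun.rep_eq)
    then show ?thesis by blast
  qed
  ultimately obtain z where z: "z \<in> S" "\<Phi> z = z"
    using Banach_fix[of S "\<delta> * L" \<Phi>] into contr d L0 dL by auto
  have zG: "apply_bcontfun z t = G z t" if "t \<in> I" for t
    using \<Phi>[OF z(1), of t] z(2) that cI by simp
  show ?thesis
  proof (intro exI conjI ballI)
    show "apply_bcontfun z sa = p" using zG[of sa] d by (simp add: I_def G_def)
    fix t assume t: "t \<in> {sa..sa+\<delta>}"
    show "apply_bcontfun z t \<in> cball p r" using z(1) memS by blast
    show "(apply_bcontfun z has_vector_derivative F (apply_bcontfun z t)) (at t within {sa..sa+\<delta>})"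
      using has_vector_derivative_transform[OF t[folded I_def] zG Gder[OF z(1) t[folded I_def]]]
      unfolding I_def by simp
  qed
qed

theorem lemma5p9:
  fixes f g :: "'a::euclidean_space \<Rightarrow> real"
    and \<zeta> :: real and x0 :: 'a and J :: "real set" and x :: "real \<Rightarrow> 'a"
  assumes A1: "filterlim f at_top at_infinity"
    and A2: "\<forall>y\<in>{y. g y \<le> 0}. grad f y \<noteq> 0"
    and A3: "\<forall>y\<in>{y. g y \<le> 0}. grad g y \<noteq> 0"
    and A4: "C2 f" "C2 g"
    and zeta: "0 \<le> \<zeta>" "\<zeta> < 1"
    and x0: "x0 \<in> {y. g y \<le> 0}"
    and traj: "is_max_sol f g \<zeta> x0 J x"
  shows "(\<exists>t\<in>J. 0 \<le> t \<and> x t \<notin> {y. g y \<le> 0}) \<and>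
         (\<exists>ts\<in>J. 0 \<le> ts \<and> g (x ts) = 0 \<and> (\<forall>t. 0 \<le> t \<and> t < ts \<longrightarrow> g (x t) < 0))"
proof -
  define F where "F = sfield f g \<zeta>"
  have cf: "continuous_on UNIV f" and cgf: "continuous_on UNIV (grad f)"
    and df: "\<And>y. (f has_derivative (\<lambda>v. grad f y \<bullet> v)) (at y)"
    using C2_grad[OF A4(1)] by blast+
  have cg: "continuous_on UNIV g" using C2_grad[OF A4(2)] by blast
  have sol: "is_sol f g \<zeta> x0 J x"
    and maxi: "\<And>J' y. is_sol f g \<zeta> x0 J' y \<Longrightarrow> J \<subseteq> J' \<Longrightarrow> (\<forall>t\<in>J. y t = x t) \<Longrightarrow> J' = J"
    using traj unfolding is_max_sol_def by blast+
  have Jint: "is_interval J" and Jopen: "open J" and J0: "0 \<in> J" and xinit: "x 0 = x0"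
    and xE: "\<And>t. t\<in>J \<Longrightarrow> x t \<in> Eset f g"
    and xd: "\<And>t. t\<in>J \<Longrightarrow> (x has_vector_derivative F (x t)) (at t)"
    using sol unfolding is_sol_def F_def by blast+
  have Jbetw: "t \<in> J" if "a \<in> J" "b \<in> J" "a \<le> t" "t \<le> b" for a b t
    using Jint that unfolding is_interval_1 by blast
  have xcont: "continuous_on J x"
    by (metis continuous_at_imp_continuous_on has_vector_derivative_continuous xd)
  have Fb: "norm (F y) \<le> 2" for y using sfield_bound zeta F_def by blast

  have partA: "\<exists>t\<in>J. 0 \<le> t \<and> x t \<notin> {y. g y \<le> 0}"
  proof (rule ccontr)
    assume "\<not> ?thesis"
    then have H: "\<And>t. t\<in>J \<Longrightarrow> 0 \<le> t \<Longrightarrow> g (x t) \<le> 0" by auto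
    have hder: "((\<lambda>t. f (x t)) has_real_derivative (grad f (x t) \<bullet> F (x t))) (at t)" if "t \<in> J" for t
    proof -
      have "(x has_derivative (\<lambda>h. h *\<^sub>R F (x t))) (at t)"
        using xd[OF that] by (simp add: has_vector_derivative_def)
      from has_derivative_compose[OF this df[of "x t"]]
      have "((\<lambda>t. f (x t)) has_derivative (\<lambda>h. grad f (x t) \<bullet> (h *\<^sub>R F (x t)))) (at t)" .
      then show ?thesis unfolding has_field_derivative_def
        by (rule has_derivative_eq_rhs) (auto simp: fun_eq_iff)
    qed
    have desc: "grad f (x t) \<bullet> F (x t) \<le> - (1 - \<zeta>) * norm (grad f (x t))" if "t \<in> J" for t
      using sfield_descent[of \<zeta> f "x t" g] xE[OF that] zeta unfolding Eset_def F_def by auto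
    have fdec: "f (x t) \<le> f x0" if "t \<in> J" "0 \<le> t" for t
    proof -
      have "f (x t) \<le> f (x 0)"
      proof (rule DERIV_nonpos_imp_nonincreasing[OF that(2)])
        fix u assume "0 \<le> u" "u \<le> t"
        then have u: "u \<in> J" using Jbetw J0 that(1) by blast
        have "- (1 - \<zeta>) * norm (grad f (x u)) \<le> 0" using zeta by (intro mult_nonpos_nonneg) auto
        then show "\<exists>y. ((\<lambda>t. f (x t)) has_real_derivative y) (at u) \<and> y \<le> 0"
          using hder[OF u] desc[OF u] by force
      qed
      then show ?thesis using xinit by simp
    qed
    define K where "K = {y. g y \<le> 0 \<and> f y \<le> f x0}"
    have Kclosed: "closed K" unfolding K_def
      by (intro closed_Collect_conj closed_Collect_le cf cg continuous_on_const)
    have Kbdd: "bounded K"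
    proof -
      from A1 have "eventually (\<lambda>y. f x0 < f y) at_infinity"
        unfolding filterlim_at_top_dense by blast
      then obtain b where b: "\<And>y. b \<le> norm y \<Longrightarrow> f x0 < f y"
        unfolding eventually_at_infinity by blast
      have "K \<subseteq> cball 0 b"
      proof
        fix y assume "y \<in> K"
        then have "\<not> b \<le> norm y" using b by (force simp: K_def)
        then show "y \<in> cball 0 b" by simp
      qed
      then show ?thesis using bounded_cball bounded_subset by blast
    qed
    have Kc: "compact K" using Kclosed Kbdd compact_eq_bounded_closed by blast
    have x0K: "x0 \<in> K" using x0 by (simp add: K_def)
    have xK: "x t \<in> K" if "t \<in> J" "0 \<le> t" for t using H fdec that by (simp add: K_def)
    obtain ym where ym: "ym \<in> K" "\<And>y. y \<in> K \<Longrightarrow> norm (grad f ym) \<le> norm (grad f y)"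
      using continuous_attains_inf[OF Kc, of "\<lambda>y. norm (grad f y)"] x0K
        continuous_on_subset[OF continuous_on_norm[OF cgf]] by blast
    define c where "c = norm (grad f ym)"
    have c0: "c > 0" using ym(1) A2 by (auto simp: K_def c_def)
    obtain yb where yb: "yb \<in> K" "\<And>y. y \<in> K \<Longrightarrow> f yb \<le> f y"
      using continuous_attains_inf[OF Kc, of f] x0K continuous_on_subset[OF cf] by blast
    have lin: "f (x t) + (1 - \<zeta>) * c * t \<le> f x0" if "t \<in> J" "0 \<le> t" for t
    proof -
      have "f (x t) + (1 - \<zeta>) * c * t \<le> f (x 0) + (1 - \<zeta>) * c * 0"
      proof (rule DERIV_nonpos_imp_nonincreasing[OF that(2), where f="\<lambda>t. f (x t) + (1 - \<zeta>) * c * t"])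
        fix u assume "0 \<le> u" "u \<le> t"
        then have u: "u \<in> J" using Jbetw J0 that(1) by blast
        have d: "((\<lambda>t. f (x t) + (1 - \<zeta>) * c * t) has_real_derivative (grad f (x u) \<bullet> F (x u) + (1 - \<zeta>) * c)) (at u)"
          by (rule derivative_eq_intros hder[OF u] | simp)+
        have "(1 - \<zeta>) * c \<le> (1 - \<zeta>) * norm (grad f (x u))"
          using ym(2)[OF xK[OF u \<open>0 \<le> u\<close>]] zeta by (simp add: c_def)
        moreover have "- (1 - \<zeta>) * norm (grad f (x u)) = - ((1 - \<zeta>) * norm (grad f (x u)))" by (simp only: mult_minus_left)
        ultimately have "grad f (x u) \<bullet> F (x u) + (1 - \<zeta>) * c \<le> 0" using desc[OF u] by linarith
        then show "\<exists>y. ((\<lambda>t. f (x t) + (1 - \<zeta>) * c * t) has_real_derivative y) (at u) \<and> y \<le> 0"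
          using d by blast
      qed
      then show ?thesis using xinit by simp
    qed
    define Tb where "Tb = (f x0 - f yb) / ((1 - \<zeta>) * c)"
    have tb: "t \<le> Tb" if "t \<in> J" "0 \<le> t" for t
    proof -
      have "f yb \<le> f (x t)" using yb(2) xK[OF that] .
      then have "(1 - \<zeta>) * c * t \<le> f x0 - f yb" using lin[OF that] by simp
      moreover have "(1 - \<zeta>) * c > 0" using zeta c0 by simp
      ultimately show ?thesis unfolding Tb_def by (simp add: pos_le_divide_eq mult.commute)
    qed
    have bddJ: "bdd_above J"
    proof
      fix t assume "t \<in> J"
      then show "t \<le> max 0 Tb" using tb[of t] by (cases "0 \<le> t") auto
    qed
    define T where "T = Sup J"
    have leT: "t \<le> T" if "t \<in> J" for t using cSup_upper[OF that bddJ] T_def by simp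
    have TnJ: "T \<notin> J"
    proof
      assume "T \<in> J"
      then obtain e where e: "e > 0" "ball T e \<subseteq> J" using Jopen open_contains_ball by blast
      then have "T + e / 2 \<in> J" by (auto simp: dist_real_def)
      then show False using leT[of "T + e/2"] e by simp
    qed
    have ltT: "t < T" if "t \<in> J" for t using leT[OF that] TnJ that by (metis order.not_eq_order_implies_strict)
    have T0: "0 < T" using ltT J0 by simp
    have inJ: "t \<in> J" if h: "0 \<le> t" "t < T" for t
    proof -
      obtain s where "s \<in> J" "t < s" using less_cSupD[of J t] J0 h(2) T_def by blast
      then show ?thesis using Jbetw[OF J0 \<open>s \<in> J\<close> h(1)] by simp
    qed
    have xlip: "norm (x s - x t) \<le> 2 * \<bar>s - t\<bar>" if "s \<in> J" "t \<in> J" for s t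
    proof (rule vec_lip[of J x "\<lambda>t. F (x t)" 2 t s])
      show "convex J" using Jint is_interval_convex_1 by blast
    qed (use that Fb has_vector_derivative_at_within[OF xd] in auto)
    have "2-lipschitz_on {0..<T} x"
      by (rule lipschitz_onI) (use xlip inJ in \<open>auto simp: dist_norm dist_real_def\<close>)
    then have uc: "uniformly_continuous_on {0..<T} x" by (rule lipschitz_on_uniformly_continuous)
    have "T \<in> closure {0..<T}" using T0 by simp
    then obtain xs where xs: "(x \<longlongrightarrow> xs) (at T within {0..<T})"
      using uniformly_continuous_on_extension_at_closure[OF uc] by blast
    have nontriv: "at T within {0..<T} \<noteq> bot"
    proof -
      have "T islimpt {0..<T}" using T0 by simp
      then show ?thesis using trivial_limit_within[of T "{0..<T}"] by simp
    qed
    have xsOm: "g xs \<le> 0"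
    proof -
      have "xs \<in> {y. g y \<le> 0}"
      proof (rule Lim_in_closed_set[OF _ _ nontriv xs])
        show "closed {y. g y \<le> 0}" by (intro closed_Collect_le cg continuous_on_const)
        show "eventually (\<lambda>t. x t \<in> {y. g y \<le> 0}) (at T within {0..<T})"
          unfolding eventually_at using H inJ by (intro exI[of _ 1]) auto
      qed
      then show ?thesis by simp
    qed
    obtain R L where R: "R > 0" and L0: "L \<ge> 0"
      and RE: "\<And>y. y \<in> cball xs R \<Longrightarrow> grad f y \<noteq> 0 \<and> grad g y \<noteq> 0"
      and Rlip: "\<And>y w. y \<in> cball xs R \<Longrightarrow> w \<in> cball xs R \<Longrightarrow> norm (F y - F w) \<le> L * norm (y - w)"
      using sfield_lip[OF A4 zeta(1), of xs] A2 A3 xsOm unfolding F_def by auto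
    define r where "r = R / 2"
    define \<delta> where "\<delta> = min (r / 2) (1 / (2 * L + 2))"
    have r0: "r > 0" using R by (simp add: r_def)
    have d0: "\<delta> > 0" using r0 L0 by (simp add: \<delta>_def)
    have dM: "\<delta> * 2 \<le> r" by (simp add: \<delta>_def)
    have dL: "\<delta> * L < 1"
    proof -
      have "\<delta> * L \<le> (1 / (2 * L + 2)) * L" using L0 by (intro mult_right_mono) (auto simp: \<delta>_def)
      also have "\<dots> < 1" using L0 by (simp add: field_simps)
      finally show ?thesis .
    qed
    obtain d where d: "d > 0" "\<And>t. t \<in> {0..<T} \<Longrightarrow> t \<noteq> T \<Longrightarrow> dist t T < d \<Longrightarrow> dist (x t) xs < r"
      using tendstoD[OF xs r0] unfolding eventually_at by blast
    define t0 where "t0 = max (T / 2) (T - min d \<delta> / 4)"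
    have t0: "0 < t0" "t0 < T" "T < t0 + \<delta> / 2" "T - t0 < d"
      using T0 d0 d(1) by (auto simp: t0_def)
    have t0J: "t0 \<in> J" using inJ t0 by simp
    have near: "dist (x t) xs < r" if "t0 \<le> t" "t < T" for t
      using d(2)[of t] that t0 by (auto simp: dist_real_def)
    have sub: "cball (x t0) r \<subseteq> cball xs R"
    proof
      fix y assume "y \<in> cball (x t0) r"
      then have "dist (x t0) y \<le> r" by simp
      moreover have "dist xs (x t0) < r" using near[of t0] t0 by (simp add: dist_commute)
      ultimately have "dist xs y < R" using dist_triangle[of xs y "x t0"] by (simp add: r_def)
      then show "y \<in> cball xs R" by simp
    qed
    obtain z where z0: "z t0 = x t0"
      and zb: "\<And>t. t \<in> {t0..t0+\<delta>} \<Longrightarrow> z t \<in> cball (x t0) r"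
      and zd: "\<And>t. t \<in> {t0..t0+\<delta>} \<Longrightarrow> (z has_vector_derivative F (z t)) (at t within {t0..t0+\<delta>})"
      using local_exist[where F=F and p="x t0" and sa=t0 and r=r and \<delta>=\<delta> and M=2 and L=L,
          OF r0 d0 dM dL L0 Fb Rlip] sub by blast
    have zcont: "continuous_on {t0..t0+\<delta>} z"
      using zd continuous_on_eq_continuous_within has_vector_derivative_continuous by blast
    have zx: "z t = x t" if tt: "t0 \<le> t" "t < T" for t
    proof -
      let ?w = "\<lambda>s. x s - z s"
      have I1: "{t0..t} \<subseteq> J" using inJ t0 tt by auto
      have I2: "{t0..t} \<subseteq> {t0..t0+\<delta>}" using t0 tt by auto
      have wc: "continuous_on {t0..t} (\<lambda>s. norm (?w s))"
        by (intro continuous_intros continuous_on_subset[OF xcont I1] continuous_on_subset[OF zcont I2])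
      obtain sm where sm: "sm \<in> {t0..t}" "\<And>s. s \<in> {t0..t} \<Longrightarrow> norm (?w s) \<le> norm (?w sm)"
        using continuous_attains_sup[OF compact_Icc _ wc] tt by auto
      define D where "D = norm (?w sm)"
      have wder: "(?w has_vector_derivative (F (x s) - F (z s))) (at s within {t0..t})" if "s \<in> {t0..t}" for s
        by (intro has_vector_derivative_diff has_vector_derivative_at_within[OF xd]
            has_vector_derivative_within_subset[OF zd I2]) (use that I1 I2 in auto)
      have wb: "norm (F (x s) - F (z s)) \<le> L * D" if "s \<in> {t0..t}" for s
      proof -
        have "dist xs (x s) < r" using near[of s] that \<open>t < T\<close> by (auto simp: dist_commute)
        then have "x s \<in> cball xs R" using R unfolding r_def by simp
        moreover have "z s \<in> cball xs R" using zb[of s] I2 that sub by auto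
        ultimately have "norm (F (x s) - F (z s)) \<le> L * norm (x s - z s)" by (rule Rlip)
        also have "\<dots> \<le> L * D" using sm(2)[OF that] L0 by (simp add: D_def mult_left_mono)
        finally show ?thesis .
      qed
      have "norm (?w sm - ?w t0) \<le> (L * D) * \<bar>sm - t0\<bar>"
        by (rule vec_lip[of "{t0..t}" ?w "\<lambda>s. F (x s) - F (z s)"]) (use wder wb sm tt in auto)
      then have "D \<le> (L * D) * \<bar>sm - t0\<bar>" using z0 by (simp add: D_def)
      also have "\<dots> \<le> (L * D) * \<delta>"
        using sm(1) tt t0 L0 by (intro mult_left_mono) (auto simp: D_def)
      finally have "D * (1 - \<delta> * L) \<le> 0" by (simp add: algebra_simps)
      then have "D \<le> 0" using dL by (simp add: mult_le_0_iff)
      then have "norm (?w t) \<le> 0" using sm(2)[of t] tt by (auto simp: D_def)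
      then show ?thesis by simp
    qed
    define y where "y s = (if s \<in> J then x s else z s)" for s
    define J' where "J' = J \<union> {t0<..<t0+\<delta>}"
    have zyJ: "y s = z s" if "s \<in> {t0<..<t0+\<delta>}" for s
    proof (cases "s \<in> J")
      case True
      have "z s = x s" using zx[of s] ltT[OF True] that by simp
      then show ?thesis using True by (simp add: y_def)
    next
      case False
      then show ?thesis by (simp add: y_def)
    qed
    have I1: "is_interval J'" unfolding is_interval_1
      proof (intro ballI allI impI)
        fix a b s assume a: "a \<in> J'" and b: "b \<in> J'" and s: "a \<le> s \<and> s \<le> b"
        show "s \<in> J'"
        proof (cases "s \<le> t0")
          case True
          have "a \<in> J" using a True s by (auto simp: J'_def)
          then have "s \<in> J" using Jbetw[OF _ t0J, of a s] True s by blast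
          then show ?thesis by (simp add: J'_def)
        next
          case False
          have "b < t0 + \<delta>"
          proof (cases "b \<in> J")
            case True
            then show ?thesis using ltT[OF True] t0 d0 by linarith
          next
            case False
            then show ?thesis using b by (simp add: J'_def)
          qed
          then show ?thesis using False s by (auto simp: J'_def)
        qed
      qed
    have I2: "open J'" by (simp add: J'_def Jopen open_Un)
    have I3: "0 \<in> J'" using J0 by (simp add: J'_def)
    have I4: "y 0 = x0" using J0 xinit by (simp add: y_def)
    have I5: "y s \<in> Eset f g \<and> (y has_vector_derivative F (y s)) (at s)" if s: "s \<in> J'" for s
      proof (cases "s \<in> J")
        case True
        have "(y has_vector_derivative F (x s)) (at s)"
          by (rule has_vector_derivative_transform_within_open[OF xd[OF True] Jopen True]) (simp add: y_def)
        then show ?thesis using True xE by (simp add: y_def)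
      next
        case False
        then have s2: "s \<in> {t0<..<t0+\<delta>}" using s by (simp add: J'_def)
        have "(z has_vector_derivative F (z s)) (at s)"
          using zd[of s] s2 at_within_Icc_at[of t0 s "t0+\<delta>"] by auto
        then have "(y has_vector_derivative F (z s)) (at s)"
          by (rule has_vector_derivative_transform_within_open[OF _ _ s2]) (auto simp: zyJ)
        moreover have "z s \<in> Eset f g" using zb[of s] s2 sub RE by (force simp: Eset_def)
        ultimately show ?thesis using False by (simp add: y_def)
      qed
    have "is_sol f g \<zeta> x0 J' y"
      unfolding is_sol_def using I1 I2 I3 I4 I5 unfolding F_def by blast
    moreover have "J \<subseteq> J'" by (simp add: J'_def)
    moreover have "\<forall>t\<in>J. y t = x t" by (simp add: y_def)
    ultimately have "J' = J" by (rule maxi)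
    moreover have "t0 + \<delta> / 2 \<in> J'" using d0 by (simp add: J'_def)
    moreover have "t0 + \<delta> / 2 \<notin> J"
    proof
      assume "t0 + \<delta> / 2 \<in> J"
      from ltT[OF this] show False using t0 by linarith
    qed
    ultimately show False by simp
  qed
  then obtain t1 where t1': "t1 \<in> J" "0 \<le> t1" "x t1 \<notin> {y. g y \<le> 0}" by blast
  then have t1: "t1 \<in> J" "0 \<le> t1" "g (x t1) > 0" by auto
  define S where "S = {t \<in> {0..t1}. 0 \<le> g (x t)}"
  have sub01: "{0..t1} \<subseteq> J"
  proof
    fix t assume "t \<in> {0..t1}"
    then show "t \<in> J" using Jbetw[OF J0 t1(1), of t] by simp
  qed
  have gc: "continuous_on {0..t1} (\<lambda>t. g (x t))"
    by (rule continuous_on_compose2[OF cg continuous_on_subset[OF xcont sub01]]) auto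
  have "closed ({0..t1} \<inter> (\<lambda>t. g (x t)) -` {0..})"
    by (rule continuous_closed_preimage[OF gc]) auto
  moreover have "{0..t1} \<inter> (\<lambda>t. g (x t)) -` {0..} = S" by (auto simp: S_def)
  ultimately have Sc: "closed S" by simp
  have t1S: "t1 \<in> S" using t1 by (simp add: S_def)
  have Sb: "bdd_below S" by (rule bdd_belowI[of _ 0]) (auto simp: S_def)
  define ts where "ts = Inf S"
  have tsS: "ts \<in> S" using closed_contains_Inf[OF _ Sb Sc] t1S ts_def by blast
  have below: "g (x t) < 0" if "0 \<le> t" "t < ts" for t
  proof (rule ccontr)
    assume "\<not> g (x t) < 0"
    then have "t \<in> S" using that tsS by (auto simp: S_def)
    then have "ts \<le> t" using cInf_lower[OF _ Sb] ts_def by blast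
    then show False using that by simp
  qed
  have zero: "g (x ts) = 0"
  proof (cases "ts = 0")
    case True
    then show ?thesis using tsS x0 xinit by (simp add: S_def)
  next
    case False
    then have ts0: "0 < ts" using tsS by (simp add: S_def)
    have "g (x 0) \<le> 0" "0 \<le> g (x ts)" using below[of 0] ts0 tsS by (auto simp: S_def)
    moreover have "continuous_on {0..ts} (\<lambda>t. g (x t))"
      using gc by (rule continuous_on_subset) (use tsS in \<open>auto simp: S_def\<close>)
    ultimately obtain s where s: "0 \<le> s" "s \<le> ts" "g (x s) = 0"
      using IVT'[of "\<lambda>t. g (x t)" 0 0 ts] ts0 by auto
    then have "s \<in> S" using tsS by (auto simp: S_def)
    then have "ts \<le> s" using cInf_lower[OF _ Sb] ts_def by blast
    then show ?thesis using s by simp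
  qed
  have "ts \<in> J" using tsS sub01 by (auto simp: S_def)
  moreover have "0 \<le> ts" using tsS by (simp add: S_def)
  ultimately show ?thesis using partA zero below by blast
qed

end
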